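(* $\displaystyle\lim_{n\to\infty}\frac{l(8n+4)}{l(8n+3)}=\frac{257}{85}.$
   Context: For $n\ge 0$, $c(n)=\sum_{i=0}^{n}\left(\binom{n}{i}\bmod 2\right)2^{i}$, the integer whose binary digits form the $n$-th row of Pascal's triangle modulo $2$; one has $c(2n)\equiv1\pmod4$, and $l(n)=\frac{c(2n)-1}{4}$. (Stated in the paper as a conjecture of R. Stephan and proved there.) *)

theory Defs
  imports Complex_Main
begin

definition c :: "nat \<Rightarrow> nat" where
  "c n = (\<Sum>i=0..n. ((n choose i) mod 2) * 2 ^ i)"

definition l :: "nat \<Rightarrow> real" where
  "l n = (real (c (2 * n)) - 1) / 4"

end

theory Submission
  imports Defs
begin

lemma choose_even_mod:
  "\<forall>k. ((2*n) choose k) mod 2 = (if even k then (n choose (k div 2)) mod 2 else 0)"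
proof (induction n)
  case 0
  show ?case
  proof
    fix k :: nat show "((2*0) choose k) mod 2 = (if even k then (0 choose (k div 2)) mod 2 else 0)"
      by (cases k) auto
  qed
next
  case (Suc n)
  show ?case
  proof
    fix k :: nat
    show "((2*Suc n) choose k) mod 2 = (if even k then (Suc n choose (k div 2)) mod 2 else 0)"
    proof (cases k)
      case 0 then show ?thesis by simp
    next
      case (Suc k1)
      show ?thesis
      proof (cases k1)
        case 0 then show ?thesis using Suc by simp
      next
        case (Suc k2)
        have e: "(2*Suc n) choose (Suc (Suc k2)) = ((2*n) choose k2) + 2 * ((2*n) choose Suc k2) + ((2*n) choose Suc (Suc k2))"
          by (simp add: binomial_Suc_Suc)
        have m: "((2*Suc n) choose (Suc (Suc k2))) mod 2 = (((2*n) choose k2) mod 2 + ((2*n) choose Suc (Suc k2)) mod 2) mod 2"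
          unfolding e by presburger
        show ?thesis
        proof (cases "even k2")
          case True
          then obtain j where j: "k2 = 2*j" by auto
          have "Suc (Suc k2) div 2 = Suc j" using j by simp
          moreover have "Suc (Suc k2) = 2 * Suc j" using j by simp
          ultimately show ?thesis using m Suc.IH \<open>k = Suc k1\<close> Suc j
            by (simp add: mod_add_eq)
        next
          case False
          then show ?thesis using m Suc.IH \<open>k = Suc k1\<close> Suc by simp
        qed
      qed
    qed
  qed
qed

lemma choose_odd_mod:
  "((2*n+1) choose k) mod 2 = (n choose (k div 2)) mod 2"
proof (cases k)
  case 0 then show ?thesis by simp
next
  case (Suc k1)
  have "((2*n+1) choose k) = ((2*n) choose k1) + ((2*n) choose Suc k1)"
    using Suc by simp
  then have "((2*n+1) choose k) mod 2 = (((2*n) choose k1) mod 2 + ((2*n) choose Suc k1) mod 2) mod 2"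
    by (simp add: mod_add_eq)
  then show ?thesis using choose_even_mod[of n] Suc
    by (cases "even k1") (auto elim!: evenE oddE)
qed

definition e :: "nat \<Rightarrow> nat \<Rightarrow> nat" where
  "e x n = (\<Sum>i<2*(n+1). ((n choose i) mod 2) * x ^ i)"

lemma sum_ext:
  assumes "n \<le> N"
  shows "(\<Sum>i<Suc N. ((n choose i) mod 2) * x ^ i) = (\<Sum>i=0..n. ((n choose i) mod 2) * (x::nat) ^ i)"
proof -
  have "(\<Sum>i<Suc N. ((n choose i) mod 2) * x ^ i) = (\<Sum>i\<in>{0..n}. ((n choose i) mod 2) * x ^ i)"
    by (rule sum.mono_neutral_right) (use assms in \<open>auto simp: binomial_eq_0\<close>)
  then show ?thesis by simp
qed

lemma c_e: "c n = e 2 n"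
proof -
  have "e 2 n = (\<Sum>i<Suc (2*n+1). ((n choose i) mod 2) * 2 ^ i)"
    unfolding e_def by simp
  also have "\<dots> = c n" unfolding c_def by (rule sum_ext) simp
  finally show ?thesis by simp
qed

lemma sum_pairs: "(\<Sum>i<2*m. g i) = (\<Sum>j<m. g (2*j) + g (2*j+1 :: nat)) "
  for g :: "nat \<Rightarrow> nat"
  by (induction m) auto

lemma e_ext: "e x n = (\<Sum>i<2*M. ((n choose i) mod 2) * x ^ i)" if "n < 2*M"
proof -
  have a: "e x n = (\<Sum>i=0..n. ((n choose i) mod 2) * x ^ i)"
    unfolding e_def using sum_ext[of n "2*n+1" x] by simp
  have "(\<Sum>i<2*M. ((n choose i) mod 2) * x ^ i) = (\<Sum>i<Suc (2*M - 1). ((n choose i) mod 2) * x ^ i)"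
    using that by (simp add: Suc_diff_1)
  also have "\<dots> = (\<Sum>i=0..n. ((n choose i) mod 2) * x ^ i)"
    by (rule sum_ext) (use that in simp)
  finally show ?thesis using a by simp
qed

lemma e_even: "e x (2*n) = e (x^2) n"
proof -
  have "e x (2*n) = (\<Sum>i<2*(n+1). (((2*n) choose i) mod 2) * x ^ i)"
    by (rule e_ext) simp
  also have "\<dots> = (\<Sum>j<n+1. (((2*n) choose (2*j)) mod 2) * x^(2*j) + (((2*n) choose (2*j+1)) mod 2) * x^(2*j+1))"
    by (rule sum_pairs)
  also have "\<dots> = (\<Sum>j<n+1. ((n choose j) mod 2) * (x^2)^j)"
    using choose_even_mod[of n] by (simp add: power_mult)
  also have "\<dots> = (\<Sum>j<Suc n. ((n choose j) mod 2) * (x^2)^j)" by simp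
  also have "\<dots> = e (x^2) n"
    unfolding e_def using sum_ext[of n n "x^2"] sum_ext[of n "2*n+1" "x^2"] by simp
  finally show ?thesis .
qed

lemma e_odd: "e x (2*n+1) = (1+x) * e (x^2) n"
proof -
  have "e x (2*n+1) = (\<Sum>i<2*(n+1). (((2*n+1) choose i) mod 2) * x ^ i)"
    by (rule e_ext) simp
  also have "\<dots> = (\<Sum>j<n+1. (((2*n+1) choose (2*j)) mod 2) * x^(2*j) + (((2*n+1) choose (2*j+1)) mod 2) * x^(2*j+1))"
    by (rule sum_pairs)
  also have "\<dots> = (\<Sum>j<n+1. (1+x) * (((n choose j) mod 2) * (x^2)^j))"
  proof (rule sum.cong[OF refl])
    fix j
    have h1: "((2*n+1) choose (2*j)) mod 2 = (n choose j) mod 2"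
      using choose_odd_mod[of n "2*j"] by simp
    have h2: "((2*n+1) choose (2*j+1)) mod 2 = (n choose j) mod 2"
      using choose_odd_mod[of n "2*j+1"] by simp
    show "(((2*n+1) choose (2*j)) mod 2) * x^(2*j) + (((2*n+1) choose (2*j+1)) mod 2) * x^(2*j+1) = (1+x) * (((n choose j) mod 2) * (x^2)^j)"
      unfolding h1 h2 by (simp only: power_mult[symmetric] power_add) (simp add: algebra_simps)
  qed
  also have "\<dots> = (1+x) * (\<Sum>j<Suc n. ((n choose j) mod 2) * (x^2)^j)" by (simp only: sum_distrib_left Suc_eq_plus1)
  also have "\<dots> = (1+x) * e (x^2) n"
    unfolding e_def using sum_ext[of n n "x^2"] sum_ext[of n "2*n+1" "x^2"] by simp
  finally show ?thesis .
qed

lemma e_ge: "e x n \<ge> x ^ n"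
proof -
  have "x ^ n = ((n choose n) mod 2) * x ^ n" by simp
  also have "\<dots> \<le> e x n" unfolding e_def
    by (rule member_le_sum) auto
  finally show ?thesis .
qed

lemma c1: "c (16*n+8) = 257 * e 65536 n"
proof -
  have "16*n+8 = 2*(2*(2*(2*n+1)))" by simp
  then have "c (16*n+8) = e 2 (2*(2*(2*(2*n+1))))" by (simp only: c_e)
  also have "\<dots> = 257 * e 65536 n" by (simp only: e_even e_odd) simp
  finally show ?thesis .
qed

lemma c2: "c (16*n+6) = 85 * e 65536 n"
proof -
  have "16*n+6 = 2*(2*(2*(2*n)+1)+1)" by simp
  then have "c (16*n+6) = e 2 (2*(2*(2*(2*n)+1)+1))" by (simp only: c_e)
  also have "\<dots> = 85 * e 65536 n" by (simp only: e_even e_odd) simp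
  finally show ?thesis .
qed

theorem mainTheorem12:
  shows "(\<lambda>n. l (8 * n + 4) / l (8 * n + 3)) \<longlonglongrightarrow> 257 / 85"
proof -
  define P where "P n = real (e 65536 n)" for n
  have Pge: "P n \<ge> real n + 1" for n
  proof -
    have "real n + 1 \<le> 2 ^ n" by (induction n) auto
    also have "(2::real) ^ n \<le> 65536 ^ n" by (rule power_mono) auto
    also have "\<dots> \<le> P n" unfolding P_def using e_ge[of 65536 n]
      by (metis of_nat_le_iff of_nat_numeral of_nat_power)
    finally show ?thesis .
  qed
  have eq: "l (8 * n + 4) / l (8 * n + 3) = (257 - inverse (P n)) / (85 - inverse (P n))" for n
  proof -
    have "2*(8*n+4) = 16*n+8" "2*(8*n+3) = 16*n+6" by simp_all
    then have "l (8 * n + 4) / l (8 * n + 3) = (1028 * P n - 4) / (340 * P n - 4)"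
      unfolding l_def P_def using c1 c2 by simp
    also have "\<dots> = (4*(257 * P n - 1)) / (4*(85 * P n - 1))" by (simp add: algebra_simps)
    also have "\<dots> = (257 * P n - 1) / (85 * P n - 1)" by (rule mult_divide_mult_cancel_left) simp
    finally have E: "l (8 * n + 4) / l (8 * n + 3) = (257 * P n - 1) / (85 * P n - 1)" .
    have p: "P n \<noteq> 0" using Pge[of n] by linarith
    have a: "257 - inverse (P n) = (257 * P n - 1) / P n" using p by (simp add: field_simps)
    have b: "85 - inverse (P n) = (85 * P n - 1) / P n" using p by (simp add: field_simps)
    show ?thesis unfolding E a b using p by simp
  qed
  have inv: "(\<lambda>n. inverse (P n)) \<longlonglongrightarrow> 0"
  proof (rule tendsto_sandwich[of "\<lambda>_. 0" _ _ "\<lambda>n. inverse (real n + 1)"])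
    show "\<forall>\<^sub>F n in sequentially. 0 \<le> inverse (P n)"
    proof (intro always_eventually allI)
      fix n show "0 \<le> inverse (P n)" using Pge[of n] by simp
    qed
    show "\<forall>\<^sub>F n in sequentially. inverse (P n) \<le> inverse (real n + 1)"
      using Pge by (intro always_eventually allI le_imp_inverse_le) auto
    show "(\<lambda>_. 0::real) \<longlonglongrightarrow> 0" by simp
    show "(\<lambda>n. inverse (real n + 1)) \<longlonglongrightarrow> 0"
      using LIMSEQ_inverse_real_of_nat by (simp add: add.commute)
  qed
  have "(\<lambda>n. (257 - inverse (P n)) / (85 - inverse (P n))) \<longlonglongrightarrow> (257 - 0) / (85 - 0)"
    by (intro tendsto_intros inv) simp
  then show ?thesis using eq by simp
qed

end
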